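(* Fix a time $t\ge0$ and an evaluation policy $\pi_e$. Assume (common support) that for all $x,a$, $\pi_e(a\mid x)>0$ implies $\pi_0(a\mid x)>0$, and (conditional independent censoring) that $L$ and $C$ are conditionally independent given $(x,a)$. Assume $G(t\mid x,a)>0$ for all $x,a$, and consider the estimators with correctly specified propensity score, censoring model and outcome model: $$\hat V_{\mathrm{IPCW\text{-}IPS}}=\frac1n\sum_{i=1}^n w(x_i,a_i)\frac{\mathbb{I}\{T_i>t\}}{G(t\mid x_i,a_i)},$$ $$\hat V_{\mathrm{IPCW\text{-}DR}}=\frac1n\sum_{i=1}^n\Big(w(x_i,a_i)\Big(\frac{\mathbb{I}\{T_i>t\}}{G(t\mid x_i,a_i)}-S(x_i,a_i,t)\Big)+\sum_{a\in\mathcal{A}}\pi_e(a\mid x_i)S(x_i,a,t)\Big),$$ with $w(x,a)=\pi_e(a\mid x)/\pi_0(a\mid x)$. Let $\sigma^2(x,a,t)=S(x,a,t)/G(t\mid x,a)-S(x,a,t)^2$ and $S^{\pi_e}(x,t)=\mathbb{E}_{\pi_e(a\mid x)}[S(x,a,t)]$. Then $$n\,\mathbb{V}[\hat V_{\mathrm{IPCW\text{-}IPS}}]=\mathbb{E}_{p(x)\pi_0(a\mid x)}\big[w(x,a)^2\sigma^2(x,a,t)\big]+\mathbb{E}_{p(x)}\big[\mathbb{V}_{\pi_0(a\mid x)}[w(x,a)S(x,a,t)]\big]+\mathbb{V}_{p(x)}[S^{\pi_e}(x,t)],$$ $$n\,\mathbb{V}[\hat V_{\mathrm{IPCW\text{-}DR}}]=\mathbb{E}_{p(x)\pi_0(a\mid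 x)}\big[w(x,a)^2\sigma^2(x,a,t)\big]+\mathbb{V}_{p(x)}[S^{\pi_e}(x,t)].$$ Consequently $n\mathbb{V}[\hat V_{\mathrm{IPCW\text{-}IPS}}]-n\mathbb{V}[\hat V_{\mathrm{IPCW\text{-}DR}}]=\mathbb{E}_{p(x)}[\mathbb{V}_{\pi_0(a\mid x)}[w(x,a)S(x,a,t)]]\ge0$, so $\mathbb{V}[\hat V_{\mathrm{IPCW\text{-}DR}}]\le\mathbb{V}[\hat V_{\mathrm{IPCW\text{-}IPS}}]$.
   Context: Let $\mathcal{X}$ be a context space and $\mathcal{A}$ a finite action set. A policy $\pi(a\mid x)$ is a conditional distribution over $\mathcal{A}$ given $x$. The logged data $\mathcal{D}=\{(x_i,a_i,T_i,r_i)\}_{i=1}^n$ consists of $n$ i.i.d. draws generated by $(x,a,L,C)\sim p(x)\pi_0(a\mid x)p(L,C\mid x,a)$ for a logging policy $\pi_0$, where $L\ge0$ is the latent survival time, $C\ge0$ the censoring time, and only $T=\min\{L,C\}$ and $r=\mathbb{I}\{L\le C\}$ are observed. Define $S(x,a,t)=P(L>t\mid x,a)$ and $G(t\mid x,a)=P(C>t\mid x,a)$. Variances $\mathbb{V}$ of estimators are over the draw of $\mathcal{D}$. *)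

theory Defs
  imports "HOL-Probability.Probability"
begin

text \<open>Survival function S(x,a,t) = P(L > t | x,a) and censoring survival
  G(t | x,a) = P(C > t | x,a), where K x a is the conditional joint law of (L,C).\<close>
definition surv :: "('x \<Rightarrow> 'a \<Rightarrow> (real \<times> real) measure) \<Rightarrow> 'x \<Rightarrow> 'a \<Rightarrow> real \<Rightarrow> real" where
  "surv K x a t = measure (distr (K x a) borel fst) {t<..}"

definition cens :: "('x \<Rightarrow> 'a \<Rightarrow> (real \<times> real) measure) \<Rightarrow> real \<Rightarrow> 'x \<Rightarrow> 'a \<Rightarrow> real" where
  "cens K t x a = measure (distr (K x a) borel snd) {t<..}"

definition iw :: "('x \<Rightarrow> 'a \<Rightarrow> real) \<Rightarrow> ('x \<Rightarrow> 'a \<Rightarrow> real) \<Rightarrow> 'x \<Rightarrow> 'a \<Rightarrow> real" where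
  "iw pe p0 x a = pe x a / p0 x a"

definition is_policy :: "'x measure \<Rightarrow> ('x \<Rightarrow> 'a::finite \<Rightarrow> real) \<Rightarrow> bool" where
  "is_policy M p \<longleftrightarrow> (\<forall>a. (\<lambda>x. p x a) \<in> borel_measurable M) \<and>
     (\<forall>x\<in>space M. (\<forall>a. p x a \<ge> 0) \<and> (\<Sum>a\<in>UNIV. p x a) = 1)"

definition act_dist :: "('x \<Rightarrow> 'a \<Rightarrow> real) \<Rightarrow> 'x \<Rightarrow> 'a measure" where
  "act_dist p x = density (count_space UNIV) (\<lambda>a. ennreal (p x a))"

definition obs_space :: "'x measure \<Rightarrow> ('x \<times> 'a \<times> real \<times> bool) measure" where
  "obs_space M = M \<Otimes>\<^sub>M count_space UNIV \<Otimes>\<^sub>M borel \<Otimes>\<^sub>M count_space UNIV"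

definition obs_law :: "'x measure \<Rightarrow> ('x \<Rightarrow> 'a \<Rightarrow> real) \<Rightarrow> ('x \<Rightarrow> 'a \<Rightarrow> (real \<times> real) measure)
    \<Rightarrow> ('x \<times> 'a \<times> real \<times> bool) measure" where
  "obs_law M p0 K =
     M \<bind> (\<lambda>x. act_dist p0 x \<bind>
        (\<lambda>a. distr (K x a) (obs_space M) (\<lambda>(l, c). (x, a, min l c, l \<le> c))))"

definition data_law :: "nat \<Rightarrow> 'x measure \<Rightarrow> ('x \<Rightarrow> 'a \<Rightarrow> real) \<Rightarrow> ('x \<Rightarrow> 'a \<Rightarrow> (real \<times> real) measure)
    \<Rightarrow> (nat \<Rightarrow> 'x \<times> 'a \<times> real \<times> bool) measure" where
  "data_law n M p0 K = PiM {..<n} (\<lambda>_. obs_law M p0 K)"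

definition V_ips :: "nat \<Rightarrow> ('x \<Rightarrow> 'a \<Rightarrow> real) \<Rightarrow> ('x \<Rightarrow> 'a \<Rightarrow> real) \<Rightarrow> ('x \<Rightarrow> 'a \<Rightarrow> (real \<times> real) measure)
    \<Rightarrow> real \<Rightarrow> (nat \<Rightarrow> 'x \<times> 'a \<times> real \<times> bool) \<Rightarrow> real" where
  "V_ips n pe p0 K t D = (1 / real n) * (\<Sum>i<n. case D i of (x, a, T, r) \<Rightarrow>
      iw pe p0 x a * (if T > t then 1 else 0) / cens K t x a)"

definition V_dr :: "nat \<Rightarrow> ('x \<Rightarrow> 'a::finite \<Rightarrow> real) \<Rightarrow> ('x \<Rightarrow> 'a \<Rightarrow> real) \<Rightarrow> ('x \<Rightarrow> 'a \<Rightarrow> (real \<times> real) measure)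
    \<Rightarrow> real \<Rightarrow> (nat \<Rightarrow> 'x \<times> 'a \<times> real \<times> bool) \<Rightarrow> real" where
  "V_dr n pe p0 K t D = (1 / real n) * (\<Sum>i<n. case D i of (x, a, T, r) \<Rightarrow>
      iw pe p0 x a * ((if T > t then 1 else 0) / cens K t x a - surv K x a t)
      + (\<Sum>b\<in>UNIV. pe x b * surv K x b t))"

definition sigma2 :: "('x \<Rightarrow> 'a \<Rightarrow> (real \<times> real) measure) \<Rightarrow> 'x \<Rightarrow> 'a \<Rightarrow> real \<Rightarrow> real" where
  "sigma2 K x a t = surv K x a t / cens K t x a - (surv K x a t)\<^sup>2"

definition surv_pol :: "('x \<Rightarrow> 'a::finite \<Rightarrow> real) \<Rightarrow> ('x \<Rightarrow> 'a \<Rightarrow> (real \<times> real) measure) \<Rightarrow> 'x \<Rightarrow> real \<Rightarrow> real" where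
  "surv_pol pe K x t = (\<Sum>a\<in>UNIV. pe x a * surv K x a t)"

definition var_act :: "('x \<Rightarrow> 'a::finite \<Rightarrow> real) \<Rightarrow> 'x \<Rightarrow> ('a \<Rightarrow> real) \<Rightarrow> real" where
  "var_act p x f = (\<Sum>a\<in>UNIV. p x a * (f a)\<^sup>2) - (\<Sum>a\<in>UNIV. p x a * f a)\<^sup>2"

end

theory Submission
  imports Defs
begin

lemma iid_var:
  fixes Q :: "'b measure" and f :: "'b \<Rightarrow> real" and n :: nat
  assumes Qp: "prob_space Q" and fi: "integrable Q f" and f2: "integrable Q (\<lambda>z. (f z)\<^sup>2)" and n: "1 \<le> n"
  shows "real n * prob_space.variance (PiM {..<n} (\<lambda>_. Q)) (\<lambda>D. (1/real n) * (\<Sum>i<n. f (D i)))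
         = prob_space.variance Q f"
proof -
  interpret Q: prob_space Q by fact
  interpret P: product_prob_space "\<lambda>_. Q" "{..<n}" by unfold_locales
  let ?P = "PiM {..<n} (\<lambda>_. Q)"
  define \<mu> where "\<mu> = Q.expectation f"
  define g where "g z = f z - \<mu>" for z
  have fm[measurable]: "f \<in> borel_measurable Q" using fi by auto
  have gi: "integrable Q g" unfolding g_def using fi by auto
  have g2: "integrable Q (\<lambda>z. (g z)\<^sup>2)" unfolding g_def power2_diff
    using fi f2 by (intro Bochner_Integration.integrable_diff Bochner_Integration.integrable_add) auto
  have g0: "Q.expectation g = 0" unfolding g_def \<mu>_def using fi by (simp add: Q.prob_space)
  have vg: "Q.variance f = Q.expectation (\<lambda>z. (g z)\<^sup>2)" unfolding g_def \<mu>_def by simp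
  have distr: "distr ?P Q (\<lambda>\<omega>. \<omega> i) = Q" if "i < n" for i
    using that by (intro distr_PiM_component) (auto intro: Qp)
  have comp_int: "integrable ?P (\<lambda>D. h (D i))" "(\<integral>D. h (D i) \<partial>?P) = integral\<^sup>L Q h"
    if "i < n" "integrable Q h" for i and h :: "'b \<Rightarrow> real"
  proof -
    have hm: "h \<in> borel_measurable Q" using that by auto
    have im: "(\<lambda>\<omega>. \<omega> i) \<in> measurable ?P Q" using that by (auto intro!: measurable_component_singleton)
    show "integrable ?P (\<lambda>D. h (D i))"
      using that integrable_distr_eq[OF im hm] distr[OF \<open>i<n\<close>] by simp
    show "(\<integral>D. h (D i) \<partial>?P) = integral\<^sup>L Q h"
      using integral_distr[OF im hm] distr[OF \<open>i<n\<close>] by simp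
  qed
  have fin: "finite {..<n}" by simp
  have pair0: "integrable ?P (\<lambda>D. g (D i) * g (D j)) \<and> (\<integral>D. g (D i) * g (D j) \<partial>?P) = (if i = j then Q.expectation (\<lambda>z. (g z)\<^sup>2) else 0)"
    if "i < n" "j < n" for i j
  proof (cases "i = j")
    case True
    then show ?thesis
      using comp_int[OF \<open>i<n\<close> g2] by (simp_all add: power2_eq_square)
  next
    case False
    define h where "h k = (if k = i \<or> k = j then g else (\<lambda>_. 1::real))" for k
    have hi: "integrable Q (h k)" for k unfolding h_def using gi by auto
    have eq: "(\<Prod>k\<in>{..<n}. h k (D k)) = g (D i) * g (D j)" for D
    proof -
      have "(\<Prod>k\<in>{..<n}. h k (D k)) = (\<Prod>k\<in>{i,j}. h k (D k))"
        using that by (intro prod.mono_neutral_right) (auto simp: h_def)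
      also have "\<dots> = g (D i) * g (D j)" using False by (simp add: h_def)
      finally show ?thesis .
    qed
    have "(\<Prod>k\<in>{..<n}. integral\<^sup>L Q (h k)) = (\<Prod>k\<in>{i,j}. integral\<^sup>L Q (h k))"
      using that by (intro prod.mono_neutral_right) (auto simp: h_def Q.prob_space)
    also have "\<dots> = 0" using False g0 by (simp add: h_def)
    finally have z: "(\<Prod>k\<in>{..<n}. integral\<^sup>L Q (h k)) = 0" .
    have A: "integrable ?P (\<lambda>D. \<Prod>k\<in>{..<n}. h k (D k))"
      by (rule P.product_integrable_prod) (auto simp: hi)
    have B: "(\<integral>D. (\<Prod>k\<in>{..<n}. h k (D k)) \<partial>?P) = (\<Prod>k\<in>{..<n}. integral\<^sup>L Q (h k))"
      by (rule P.product_integral_prod) (auto simp: hi)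
    show ?thesis
      using A B z False by (simp only: eq) simp
  qed
  note pair = conjunct1[OF pair0] conjunct2[OF pair0]
  have EV: "P.expectation (\<lambda>D. (1/real n) * (\<Sum>i<n. f (D i))) = \<mu>"
  proof -
    have "P.expectation (\<lambda>D. (1/real n) * (\<Sum>i<n. f (D i))) = (1/real n) * (\<Sum>i<n. P.expectation (\<lambda>D. f (D i)))"
      using comp_int(1)[OF _ fi] by (simp add: Bochner_Integration.integral_sum)
    also have "\<dots> = (1/real n) * (\<Sum>i<n. \<mu>)" using comp_int(2)[OF _ fi] by (simp add: \<mu>_def)
    also have "\<dots> = \<mu>" using n by simp
    finally show ?thesis .
  qed
  have cen: "(1/real n) * (\<Sum>i<n. f (D i)) - \<mu> = (1/real n) * (\<Sum>i<n. g (D i))" for D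
    using n by (simp add: g_def sum_subtractf field_simps)
  have sq: "((1/real n) * (\<Sum>i<n. g (D i)))\<^sup>2 = (1/real n)\<^sup>2 * (\<Sum>i<n. \<Sum>j<n. g (D i) * g (D j))" for D
    by (simp add: power_mult_distrib power2_eq_square sum_product)
  have "P.variance (\<lambda>D. (1/real n) * (\<Sum>i<n. f (D i)))
      = P.expectation (\<lambda>D. (1/real n)\<^sup>2 * (\<Sum>i<n. \<Sum>j<n. g (D i) * g (D j)))"
    by (simp only: EV cen sq)
  also have "\<dots> = (1/real n)\<^sup>2 * (\<Sum>i<n. \<Sum>j<n. P.expectation (\<lambda>D. g (D i) * g (D j)))"
  proof -
    have "P.expectation (\<lambda>D. \<Sum>i<n. \<Sum>j<n. g (D i) * g (D j)) = (\<Sum>i<n. P.expectation (\<lambda>D. \<Sum>j<n. g (D i) * g (D j)))"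
      using pair(1) by (intro Bochner_Integration.integral_sum Bochner_Integration.integrable_sum) auto
    also have "\<dots> = (\<Sum>i<n. \<Sum>j<n. P.expectation (\<lambda>D. g (D i) * g (D j)))"
      using pair(1) by (intro sum.cong refl Bochner_Integration.integral_sum) auto
    finally show ?thesis by simp
  qed
  also have "\<dots> = (1/real n)\<^sup>2 * (\<Sum>i<n. Q.expectation (\<lambda>z. (g z)\<^sup>2))"
  proof -
    have "(\<Sum>j<n. P.expectation (\<lambda>D. g (D i) * g (D j))) = Q.expectation (\<lambda>z. (g z)\<^sup>2)" if "i < n" for i
    proof -
      have "(\<Sum>j<n. P.expectation (\<lambda>D. g (D i) * g (D j))) = (\<Sum>j<n. if i = j then Q.expectation (\<lambda>z. (g z)\<^sup>2) else 0)"
        using pair(2) that by (intro sum.cong) auto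
      also have "\<dots> = Q.expectation (\<lambda>z. (g z)\<^sup>2)" using that by (simp add: sum.delta)
      finally show ?thesis .
    qed
    then show ?thesis by simp
  qed
  also have "\<dots> = Q.variance f / real n" using n by (simp only: vg) (simp add: power2_eq_square)
  finally show ?thesis using n by simp
qed



context
  fixes M :: "'x measure"
    and p0 :: "'x \<Rightarrow> 'a::finite \<Rightarrow> real"
    and K :: "'x \<Rightarrow> 'a \<Rightarrow> (real \<times> real) measure"
  assumes P: "prob_space M"
    and pol0: "is_policy M p0"
    and kern: "\<And>a. (\<lambda>x. K x a) \<in> measurable M (prob_algebra (borel \<Otimes>\<^sub>M borel))"
    and indep: "\<And>x a. x \<in> space M \<Longrightarrow>
                   K x a = distr (K x a) borel fst \<Otimes>\<^sub>M distr (K x a) borel snd"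
begin

lemma p0_meas[measurable]: "(\<lambda>x. p0 x a) \<in> borel_measurable M"
  using pol0 unfolding is_policy_def by auto

lemma p0_nonneg: "x \<in> space M \<Longrightarrow> 0 \<le> p0 x a"
  using pol0 unfolding is_policy_def by auto

lemma p0_sum: "x \<in> space M \<Longrightarrow> (\<Sum>a\<in>UNIV. p0 x a) = 1"
  using pol0 unfolding is_policy_def by auto

lemma K_space: "x \<in> space M \<Longrightarrow> sets (K x a) = sets (borel \<Otimes>\<^sub>M borel) \<and> prob_space (K x a)"
  using measurable_space[OF kern] by (auto simp: space_prob_algebra)

lemma act_dist_emeasure: "x \<in> space M \<Longrightarrow> emeasure (act_dist p0 x) A = (\<Sum>a\<in>A. ennreal (p0 x a))"
  unfolding act_dist_def point_measure_def[symmetric]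
  by (subst emeasure_point_measure_finite) auto

lemma act_dist_prob: "x \<in> space M \<Longrightarrow> prob_space (act_dist p0 x)"
proof (rule prob_spaceI)
  assume x: "x \<in> space M"
  have sp: "space (act_dist p0 x) = UNIV" by (simp add: act_dist_def)
  have "emeasure (act_dist p0 x) UNIV = ennreal (\<Sum>a\<in>UNIV. p0 x a)"
    using x by (simp add: act_dist_emeasure sum_ennreal p0_nonneg)
  then show "emeasure (act_dist p0 x) (space (act_dist p0 x)) = 1" using x by (simp add: sp p0_sum)
qed

lemma act_dist_meas: "act_dist p0 \<in> measurable M (subprob_algebra (count_space UNIV))"
proof (rule measurable_subprob_algebra)
  fix x assume "x \<in> space M"
  then show "subprob_space (act_dist p0 x)" using act_dist_prob prob_space_imp_subprob_space by blast
  show "sets (act_dist p0 x) = sets (count_space UNIV)" by (simp add: act_dist_def)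
next
  fix A :: "'a set" 
  show "(\<lambda>x. emeasure (act_dist p0 x) A) \<in> borel_measurable M"
    by (subst measurable_cong[OF act_dist_emeasure]) auto
qed

lemma h_meas[measurable]:
  "x \<in> space M \<Longrightarrow> (\<lambda>(l::real, c::real). (x, a, min l c, l \<le> c)) \<in> measurable (borel \<Otimes>\<^sub>M borel) (obs_space M)"
  unfolding obs_space_def by measurable

lemma h2_meas:
  "(\<lambda>(x, l::real, c::real). (x, a, min l c, l \<le> c)) \<in> measurable (M \<Otimes>\<^sub>M (borel \<Otimes>\<^sub>M borel)) (obs_space M)"
  unfolding obs_space_def by measurable

lemma inner_meas:
  "(\<lambda>x. distr (K x a) (obs_space M) (\<lambda>(l, c). (x, a, min l c, l \<le> c))) \<in> measurable M (subprob_algebra (obs_space M))"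
proof (subst measurable_cong)
  fix x assume x: "x \<in> space M"
  have ne: "space (K x a) \<noteq> {}" using K_space[OF x] prob_space.not_empty by blast
  have m: "(\<lambda>(l, c). (x, a, min l c, l \<le> c)) \<in> measurable (K x a) (obs_space M)"
    using h_meas[OF x] K_space[OF x] by (simp cong: measurable_cong_sets)
  show "distr (K x a) (obs_space M) (\<lambda>(l, c). (x, a, min l c, l \<le> c))
      = K x a \<bind> (\<lambda>lc. return (obs_space M) ((\<lambda>(x, l::real, c::real). (x, a, min l c, l \<le> c)) (x, lc)))"
    using bind_return_distr'[OF ne m] by (simp add: case_prod_beta)
next
  show "(\<lambda>x. K x a \<bind> (\<lambda>lc. return (obs_space M) ((\<lambda>(x, l::real, c::real). (x, a, min l c, l \<le> c)) (x, lc))))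
     \<in> measurable M (subprob_algebra (obs_space M))"
    apply (rule measurable_bind'[OF measurable_prob_algebraD[OF kern]])
    apply (subst case_prod_eta)
    using measurable_compose[OF h2_meas[of a] return_measurable] unfolding comp_def .
qed

definition NN :: "'x \<Rightarrow> ('x \<times> 'a \<times> real \<times> bool) measure" where
  "NN x = act_dist p0 x \<bind> (\<lambda>a. distr (K x a) (obs_space M) (\<lambda>(l, c). (x, a, min l c, l \<le> c)))"

lemma NN_meas: "NN \<in> measurable M (subprob_algebra (obs_space M))"
  unfolding NN_def
proof (rule measurable_bind'[OF act_dist_meas])
  show "(\<lambda>(x, a). distr (K x a) (obs_space M) (\<lambda>(l, c). (x, a, min l c, l \<le> c)))
    \<in> measurable (M \<Otimes>\<^sub>M count_space UNIV) (subprob_algebra (obs_space M))"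
  proof -
    have "(\<lambda>y. (\<lambda>a y. distr (K (fst y) a) (obs_space M) (\<lambda>(l, c). (fst y, a, min l c, l \<le> c))) (snd y) y)
       \<in> measurable (M \<Otimes>\<^sub>M count_space UNIV) (subprob_algebra (obs_space M))"
      by (rule measurable_compose_countable'[where I=UNIV])
         (auto intro: measurable_compose[OF measurable_fst inner_meas] countable_finite)
    moreover have "(\<lambda>y. (\<lambda>a y. distr (K (fst y) a) (obs_space M) (\<lambda>(l, c). (fst y, a, min l c, l \<le> c))) (snd y) y)
       = (\<lambda>(x, a). distr (K x a) (obs_space M) (\<lambda>(l, c). (x, a, min l c, l \<le> c)))"
      by (auto simp: fun_eq_iff)
    ultimately show ?thesis by simp
  qed
qed

lemma obs_law_NN: "obs_law M p0 K = M \<bind> NN"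
  unfolding obs_law_def NN_def ..

lemma distr_in: "x \<in> space M \<Longrightarrow>
   distr (K x a) (obs_space M) (\<lambda>(l, c). (x, a, min l c, l \<le> c)) \<in> space (subprob_algebra (obs_space M))"
  using measurable_space[OF inner_meas[of a]] by auto

lemma distr_meas_count: "x \<in> space M \<Longrightarrow>
   (\<lambda>a. distr (K x a) (obs_space M) (\<lambda>(l, c). (x, a, min l c, l \<le> c))) \<in> measurable (act_dist p0 x) (subprob_algebra (obs_space M))"
  using distr_in by (simp add: act_dist_def measurable_cong_sets[OF sets_density refl])

lemma NN_prob: "x \<in> space M \<Longrightarrow> prob_space (NN x)"
  unfolding NN_def
proof (rule prob_space.prob_space_bind[OF act_dist_prob _ distr_meas_count])
  assume x: "x \<in> space M"
  show "AE a in act_dist p0 x. prob_space (distr (K x a) (obs_space M) (\<lambda>(l, c). (x, a, min l c, l \<le> c)))"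
  proof (rule AE_I2)
    fix a
    have m: "(\<lambda>(l, c). (x, a, min l c, l \<le> c)) \<in> measurable (K x a) (obs_space M)"
      using h_meas[OF x] K_space[OF x] by (simp cong: measurable_cong_sets)
    show "prob_space (distr (K x a) (obs_space M) (\<lambda>(l, c). (x, a, min l c, l \<le> c)))"
      using K_space[OF x] m by (blast intro: prob_space.prob_space_distr)
  qed
qed

lemma Q_prob: "prob_space (obs_law M p0 K)"
  unfolding obs_law_NN
  by (rule prob_space.prob_space_bind[OF P _ NN_meas]) (auto intro: NN_prob)

lemma Q_sets: "sets (obs_law M p0 K) = sets (obs_space M)"
  unfolding obs_law_NN by (rule sets_bind[OF sets_kernel[OF NN_meas] prob_space.not_empty[OF P]])

lemma Q_nn:
  assumes f: "f \<in> borel_measurable (obs_space M)"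
  shows "(\<integral>\<^sup>+z. f z \<partial>obs_law M p0 K) =
    (\<integral>\<^sup>+x. (\<Sum>a\<in>UNIV. ennreal (p0 x a) * (\<integral>\<^sup>+lc. f (x, a, min (fst lc) (snd lc), fst lc \<le> snd lc) \<partial>K x a)) \<partial>M)"
proof -
  have "(\<integral>\<^sup>+z. f z \<partial>obs_law M p0 K) = (\<integral>\<^sup>+x. (\<integral>\<^sup>+z. f z \<partial>NN x) \<partial>M)"
    unfolding obs_law_NN by (rule nn_integral_bind[OF f NN_meas])
  also have "\<dots> = (\<integral>\<^sup>+x. (\<Sum>a\<in>UNIV. ennreal (p0 x a) * (\<integral>\<^sup>+lc. f (x, a, min (fst lc) (snd lc), fst lc \<le> snd lc) \<partial>K x a)) \<partial>M)"
  proof (rule nn_integral_cong)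
    fix x assume x: "x \<in> space M"
    have "(\<integral>\<^sup>+z. f z \<partial>NN x) = (\<integral>\<^sup>+a. (\<integral>\<^sup>+z. f z \<partial>distr (K x a) (obs_space M) (\<lambda>(l, c). (x, a, min l c, l \<le> c))) \<partial>act_dist p0 x)"
      unfolding NN_def by (rule nn_integral_bind[OF f distr_meas_count[OF x]])
    also have "\<dots> = (\<Sum>a\<in>UNIV. ennreal (p0 x a) * (\<integral>\<^sup>+z. f z \<partial>distr (K x a) (obs_space M) (\<lambda>(l, c). (x, a, min l c, l \<le> c))))"
      unfolding act_dist_def point_measure_def[symmetric]
      by (subst nn_integral_point_measure_finite) auto
    also have "\<dots> = (\<Sum>a\<in>UNIV. ennreal (p0 x a) * (\<integral>\<^sup>+lc. f (x, a, min (fst lc) (snd lc), fst lc \<le> snd lc) \<partial>K x a))"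
    proof (intro sum.cong refl arg_cong2[where f="(*)"])
      fix a
      have m: "(\<lambda>(l, c). (x, a, min l c, l \<le> c)) \<in> measurable (K x a) (obs_space M)"
        using h_meas[OF x] K_space[OF x] by (simp cong: measurable_cong_sets)
      show "(\<integral>\<^sup>+z. f z \<partial>distr (K x a) (obs_space M) (\<lambda>(l, c). (x, a, min l c, l \<le> c)))
          = (\<integral>\<^sup>+lc. f (x, a, min (fst lc) (snd lc), fst lc \<le> snd lc) \<partial>K x a)" (is ?thesis)
      proof -
        have fd: "f \<in> borel_measurable (distr (K x a) (obs_space M) (\<lambda>(l, c). (x, a, min l c, l \<le> c)))"
          using f unfolding measurable_cong_sets[OF sets_distr refl] .
        show ?thesis by (subst nn_integral_distr[OF m fd]) (simp add: case_prod_beta)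
      qed
    qed
    finally show "(\<integral>\<^sup>+z. f z \<partial>NN x) = (\<Sum>a\<in>UNIV. ennreal (p0 x a) * (\<integral>\<^sup>+lc. f (x, a, min (fst lc) (snd lc), fst lc \<le> snd lc) \<partial>K x a))" .
  qed
  finally show ?thesis .
qed

definition qq :: "real \<Rightarrow> 'x \<Rightarrow> 'a \<Rightarrow> real" where
  "qq t x a = surv K x a t * cens K t x a"

definition GG :: "real \<Rightarrow> ('x \<Rightarrow> 'a \<Rightarrow> bool \<Rightarrow> real) \<Rightarrow> 'x \<Rightarrow> real" where
  "GG t \<phi> x = (\<Sum>a\<in>UNIV. p0 x a * (qq t x a * \<phi> x a True + (1 - qq t x a) * \<phi> x a False))"

lemma K_event:
  assumes x: "x \<in> space M"
  shows "emeasure (K x a) ({t<..} \<times> {t<..}) = ennreal (qq t x a)"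
    "emeasure (K x a) (UNIV - {t<..} \<times> {t<..}) = ennreal (1 - qq t x a)"
    "0 \<le> qq t x a" "qq t x a \<le> 1"
proof -
  interpret Kp: prob_space "K x a" using K_space[OF x] by blast
  interpret F: prob_space "distr (K x a) borel fst" by (rule Kp.prob_space_distr) (simp add: K_space[OF x] cong: measurable_cong_sets)
  interpret S: prob_space "distr (K x a) borel snd" by (rule Kp.prob_space_distr) (simp add: K_space[OF x] cong: measurable_cong_sets)
  have sp: "space (K x a) = UNIV" using sets_eq_imp_space_eq[OF conjunct1[OF K_space[OF x]]] by (simp add: space_pair_measure)
  have E: "{t<..} \<times> {t<..} \<in> sets (K x a)" using K_space[OF x] by simp
  have "emeasure (K x a) ({t<..} \<times> {t<..}) = emeasure (distr (K x a) borel fst) {t<..} * emeasure (distr (K x a) borel snd) {t<..}"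
    by (subst indep[OF x]) (rule S.emeasure_pair_measure_Times; simp)
  also have "\<dots> = ennreal (qq t x a)"
    by (simp add: F.emeasure_eq_measure S.emeasure_eq_measure qq_def surv_def cens_def ennreal_mult)
  finally show e1: "emeasure (K x a) ({t<..} \<times> {t<..}) = ennreal (qq t x a)" .
  show q0: "0 \<le> qq t x a" by (simp add: qq_def surv_def cens_def)
  have m1: "measure (K x a) ({t<..} \<times> {t<..}) = qq t x a"
    using e1 q0 by (simp add: Kp.emeasure_eq_measure)
  then show "qq t x a \<le> 1" using Kp.prob_le_1 by metis
  show "emeasure (K x a) (UNIV - {t<..} \<times> {t<..}) = ennreal (1 - qq t x a)"
    using Kp.prob_compl[OF E] m1 sp by (simp add: Kp.emeasure_eq_measure)
qed

lemma phi_obs_meas: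
  fixes \<phi> :: "'x \<Rightarrow> 'a \<Rightarrow> bool \<Rightarrow> real"
  assumes [measurable]: "\<And>a b. (\<lambda>x. \<phi> x a b) \<in> borel_measurable M"
  shows "(\<lambda>z. \<phi> (fst z) (fst (snd z)) (t < fst (snd (snd z)))) \<in> borel_measurable (obs_space M)"
proof (rule measurable_compose_countable'[where I=UNIV and g="\<lambda>z. fst (snd z)"])
  fix a :: 'a
  show "(\<lambda>z. \<phi> (fst z) a (t < fst (snd (snd z)))) \<in> borel_measurable (obs_space M)"
  proof (rule measurable_compose_countable'[where I=UNIV and g="\<lambda>z. t < fst (snd (snd z))"])
    fix b show "(\<lambda>z. \<phi> (fst z) a b) \<in> borel_measurable (obs_space M)"
      unfolding obs_space_def by measurable
    show "(\<lambda>z. t < fst (snd (snd z))) \<in> obs_space M \<rightarrow>\<^sub>M count_space UNIV"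
      unfolding obs_space_def pred_def[symmetric] by measurable
  qed simp
  show "(\<lambda>z. fst (snd z)) \<in> obs_space M \<rightarrow>\<^sub>M count_space UNIV"
    unfolding obs_space_def by measurable
qed (rule countable_finite, simp)

lemma Q_phi_nn:
  fixes \<phi> :: "'x \<Rightarrow> 'a \<Rightarrow> bool \<Rightarrow> real"
  assumes [measurable]: "\<And>a b. (\<lambda>x. \<phi> x a b) \<in> borel_measurable M"
    and nn: "\<And>x a b. x \<in> space M \<Longrightarrow> 0 \<le> \<phi> x a b"
  shows "(\<integral>\<^sup>+z. ennreal (\<phi> (fst z) (fst (snd z)) (t < fst (snd (snd z)))) \<partial>obs_law M p0 K)
     = (\<integral>\<^sup>+x. ennreal (GG t \<phi> x) \<partial>M)"
proof -
  have fm: "(\<lambda>z. ennreal (\<phi> (fst z) (fst (snd z)) (t < fst (snd (snd z))))) \<in> borel_measurable (obs_space M)"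
    using phi_obs_meas[of \<phi>] by measurable
  show ?thesis
  proof (subst Q_nn[OF fm], rule nn_integral_cong)
    fix x assume x: "x \<in> space M"
    have inner: "(\<integral>\<^sup>+lc. ennreal (\<phi> x a (t < min (fst lc) (snd lc))) \<partial>K x a)
        = ennreal (qq t x a * \<phi> x a True + (1 - qq t x a) * \<phi> x a False)" for a
    proof -
      let ?E = "{t<..} \<times> {t<..} :: (real \<times> real) set"
      have E1: "?E \<in> sets (K x a)" using K_space[OF x] by auto
      have sp: "space (K x a) = UNIV" using sets_eq_imp_space_eq[OF conjunct1[OF K_space[OF x]]] by (simp add: space_pair_measure)
      have E: "?E \<in> sets (K x a)" "UNIV - ?E \<in> sets (K x a)" using E1 sets.compl_sets[OF E1] sp by auto
      have "(\<integral>\<^sup>+lc. ennreal (\<phi> x a (t < min (fst lc) (snd lc))) \<partial>K x a)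
          = (\<integral>\<^sup>+lc. ennreal (\<phi> x a True) * indicator ?E lc + ennreal (\<phi> x a False) * indicator (UNIV - ?E) lc \<partial>K x a)"
        by (intro nn_integral_cong) (auto simp: indicator_def mem_Times_iff)
      also have "\<dots> = ennreal (\<phi> x a True) * emeasure (K x a) ?E + ennreal (\<phi> x a False) * emeasure (K x a) (UNIV - ?E)"
        using E by (subst nn_integral_add) (auto simp: nn_integral_cmult_indicator)
      also have "\<dots> = ennreal (qq t x a * \<phi> x a True + (1 - qq t x a) * \<phi> x a False)"
      proof -
        have q: "0 \<le> qq t x a" "qq t x a \<le> 1" using K_event[OF x, where a=a] by auto
        show ?thesis
          using K_event[OF x, where a=a] nn[OF x, of a] q
          by (simp add: ennreal_mult[symmetric] ennreal_plus[symmetric] mult.commute del: ennreal_plus)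
      qed
      finally show ?thesis .
    qed
    have "(\<Sum>a\<in>UNIV. ennreal (p0 x a) * (\<integral>\<^sup>+lc. ennreal (\<phi> (fst (x, a, min (fst lc) (snd lc), fst lc \<le> snd lc))
           (fst (snd (x, a, min (fst lc) (snd lc), fst lc \<le> snd lc))) (t < fst (snd (snd (x, a, min (fst lc) (snd lc), fst lc \<le> snd lc))))) \<partial>K x a))
      = (\<Sum>a\<in>UNIV. ennreal (p0 x a * (qq t x a * \<phi> x a True + (1 - qq t x a) * \<phi> x a False)))"
      using inner p0_nonneg[OF x] by (simp add: ennreal_mult')
    also have "\<dots> = ennreal (GG t \<phi> x)"
      unfolding GG_def using K_event[OF x] p0_nonneg[OF x] nn[OF x]
      by (intro sum_ennreal) (auto intro!: mult_nonneg_nonneg add_nonneg_nonneg)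
    finally show "(\<Sum>a\<in>UNIV. ennreal (p0 x a) * (\<integral>\<^sup>+lc. ennreal (\<phi> (fst (x, a, min (fst lc) (snd lc), fst lc \<le> snd lc))
           (fst (snd (x, a, min (fst lc) (snd lc), fst lc \<le> snd lc))) (t < fst (snd (snd (x, a, min (fst lc) (snd lc), fst lc \<le> snd lc))))) \<partial>K x a))
      = ennreal (GG t \<phi> x)" .
  qed
qed

lemma surv_meas[measurable]: "(\<lambda>x. surv K x a t) \<in> borel_measurable M"
proof -
  have "(\<lambda>x. measure (K x a) ({t<..} \<times> UNIV)) \<in> borel_measurable M"
    by (rule measurable_compose[OF kern measurable_measure_prob_algebra]) simp
  moreover have "measure (K x a) ({t<..} \<times> UNIV) = surv K x a t" if x: "x \<in> space M" for x
  proof -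
    have sp: "space (K x a) = UNIV" using sets_eq_imp_space_eq[OF conjunct1[OF K_space[OF x]]] by (simp add: space_pair_measure)
    have "fst -` {t<..} \<inter> space (K x a) = {t<..} \<times> UNIV" using sp by auto
    then show ?thesis unfolding surv_def
      using K_space[OF x] by (subst measure_distr) (auto cong: measurable_cong_sets)
  qed
  ultimately show ?thesis by (rule measurable_cong[THEN iffD1, rotated]) simp
qed

lemma cens_meas[measurable]: "(\<lambda>x. cens K t x a) \<in> borel_measurable M"
proof -
  have "(\<lambda>x. measure (K x a) (UNIV \<times> {t<..})) \<in> borel_measurable M"
    by (rule measurable_compose[OF kern measurable_measure_prob_algebra]) simp
  moreover have "measure (K x a) (UNIV \<times> {t<..}) = cens K t x a" if x: "x \<in> space M" for x
  proof -
    have sp: "space (K x a) = UNIV" using sets_eq_imp_space_eq[OF conjunct1[OF K_space[OF x]]] by (simp add: space_pair_measure)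
    have "snd -` {t<..} \<inter> space (K x a) = UNIV \<times> {t<..}" using sp by auto
    then show ?thesis unfolding cens_def
      using K_space[OF x] by (subst measure_distr) (auto cong: measurable_cong_sets)
  qed
  ultimately show ?thesis by (rule measurable_cong[THEN iffD1, rotated]) simp
qed

lemma GG_meas[measurable]:
  fixes \<phi> :: "'x \<Rightarrow> 'a \<Rightarrow> bool \<Rightarrow> real"
  assumes [measurable]: "\<And>a b. (\<lambda>x. \<phi> x a b) \<in> borel_measurable M"
  shows "GG t \<phi> \<in> borel_measurable M"
  unfolding GG_def qq_def by measurable

lemma surv_bounds: "x \<in> space M \<Longrightarrow> 0 \<le> surv K x a t \<and> surv K x a t \<le> 1"
proof -
  assume x: "x \<in> space M"
  interpret Kp: prob_space "K x a" using K_space[OF x] by blast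
  interpret F: prob_space "distr (K x a) borel fst" by (rule Kp.prob_space_distr) (simp add: K_space[OF x] cong: measurable_cong_sets)
  show ?thesis unfolding surv_def by simp
qed

lemma cens_bounds: "x \<in> space M \<Longrightarrow> 0 \<le> cens K t x a \<and> cens K t x a \<le> 1"
proof -
  assume x: "x \<in> space M"
  interpret Kp: prob_space "K x a" using K_space[OF x] by blast
  interpret F: prob_space "distr (K x a) borel snd" by (rule Kp.prob_space_distr) (simp add: K_space[OF x] cong: measurable_cong_sets)
  show ?thesis unfolding cens_def by simp
qed

lemma GG_nonneg:
  assumes nn: "\<And>x a b. x \<in> space M \<Longrightarrow> 0 \<le> \<phi> x a b" and x: "x \<in> space M"
  shows "0 \<le> GG t \<phi> x"
  unfolding GG_def using K_event[OF x] p0_nonneg[OF x] nn[OF x]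
  by (intro sum_nonneg) (auto intro!: mult_nonneg_nonneg add_nonneg_nonneg)

lemma Q_phi_int:
  fixes \<phi> :: "'x \<Rightarrow> 'a \<Rightarrow> bool \<Rightarrow> real"
  assumes [measurable]: "\<And>a b. (\<lambda>x. \<phi> x a b) \<in> borel_measurable M"
    and nn: "\<And>x a b. x \<in> space M \<Longrightarrow> 0 \<le> \<phi> x a b"
    and int: "integrable M (GG t \<phi>)"
  shows "integrable (obs_law M p0 K) (\<lambda>z. \<phi> (fst z) (fst (snd z)) (t < fst (snd (snd z))))"
    "(\<integral>z. \<phi> (fst z) (fst (snd z)) (t < fst (snd (snd z))) \<partial>obs_law M p0 K) = (\<integral>x. GG t \<phi> x \<partial>M)"
proof -
  let ?f = "\<lambda>z. \<phi> (fst z) (fst (snd z)) (t < fst (snd (snd z)))"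
  have fm: "?f \<in> borel_measurable (obs_law M p0 K)"
    using phi_obs_meas[of \<phi>] unfolding measurable_cong_sets[OF Q_sets refl] by simp
  have spQ: "space (obs_law M p0 K) = space (obs_space M)" using Q_sets by (rule sets_eq_imp_space_eq)
  have fnn: "0 \<le> ?f z" if "z \<in> space (obs_law M p0 K)" for z
    using that nn unfolding spQ obs_space_def by (auto simp: space_pair_measure)
  have GGnn: "AE x in M. 0 \<le> GG t \<phi> x" using GG_nonneg[OF nn] by auto
  have eq: "(\<integral>\<^sup>+z. ennreal (?f z) \<partial>obs_law M p0 K) = ennreal (\<integral>x. GG t \<phi> x \<partial>M)"
    using Q_phi_nn[of \<phi>] nn nn_integral_eq_integral[OF int GGnn] by simp
  show "integrable (obs_law M p0 K) ?f"
  proof (rule integrableI_nonneg[OF fm])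
    show "AE x in obs_law M p0 K. 0 \<le> ?f x" using fnn by auto
    show "(\<integral>\<^sup>+z. ennreal (?f z) \<partial>obs_law M p0 K) < \<infinity>" using eq by simp
  qed
  show "(\<integral>z. ?f z \<partial>obs_law M p0 K) = (\<integral>x. GG t \<phi> x \<partial>M)"
    using integral_eq_nn_integral[OF fm] fnn eq integral_nonneg_AE[OF GGnn] by auto
qed


lemma alg_Z: fixes G S w B q :: real assumes "G > 0" "q = S*G"
  shows "q*(w*(1/G - S) + B)\<^sup>2 + (1-q)*(w*(0/G - S) + B)\<^sup>2 = w\<^sup>2*(S/G - S\<^sup>2) + B\<^sup>2"
  using assms by (simp add: field_simps power2_eq_square)

lemma alg_Y2: fixes G S w p q :: real assumes "G > 0" "q = S*G"
  shows "p * (q * (w * 1 / G)\<^sup>2 + (1 - q) * (w * 0 / G)\<^sup>2) = p * w\<^sup>2 * S / G"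
  using assms by (simp add: field_simps power2_eq_square)

lemma var_act_nonneg:
  fixes p :: "'x \<Rightarrow> 'a \<Rightarrow> real"
  assumes "\<And>a. 0 \<le> p x a" "(\<Sum>a\<in>UNIV. p x a) = 1"
  shows "0 \<le> var_act p x f"
proof -
  define m where "m = (\<Sum>a\<in>UNIV. p x a * f a)"
  have "0 \<le> (\<Sum>a\<in>UNIV. p x a * (f a - m)\<^sup>2)" using assms by (intro sum_nonneg) auto
  also have "\<dots> = (\<Sum>a\<in>UNIV. p x a * (f a)\<^sup>2) - 2 * m * (\<Sum>a\<in>UNIV. p x a * f a) + m\<^sup>2 * (\<Sum>a\<in>UNIV. p x a)"
    by (simp add: power2_diff algebra_simps sum.distrib sum_subtractf sum_distrib_left sum_distrib_right)
  also have "\<dots> = var_act p x f" using assms(2) unfolding var_act_def m_def by (simp add: power2_eq_square)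
  finally show ?thesis .
qed

lemma main:
  fixes pe :: "'x \<Rightarrow> 'a \<Rightarrow> real" and n :: nat
  assumes pole: "is_policy M pe"
    and n: "1 \<le> n"
    and support: "\<And>x a. x \<in> space M \<Longrightarrow> pe x a > 0 \<Longrightarrow> p0 x a > 0"
    and Gpos: "\<And>x a. x \<in> space M \<Longrightarrow> cens K t x a > 0"
    and finvar: "integrable M (\<lambda>x. \<Sum>a\<in>UNIV. p0 x a * (iw pe p0 x a)\<^sup>2 * surv K x a t / cens K t x a)"
  shows
    "real n * prob_space.variance (data_law n M p0 K) (V_ips n pe p0 K t)
       = (\<integral>x. (\<Sum>a\<in>UNIV. p0 x a * ((iw pe p0 x a)\<^sup>2 * sigma2 K x a t)) \<partial>M)
         + (\<integral>x. var_act p0 x (\<lambda>a. iw pe p0 x a * surv K x a t) \<partial>M)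
         + prob_space.variance M (\<lambda>x. surv_pol pe K x t)
     \<and> real n * prob_space.variance (data_law n M p0 K) (V_dr n pe p0 K t)
       = (\<integral>x. (\<Sum>a\<in>UNIV. p0 x a * ((iw pe p0 x a)\<^sup>2 * sigma2 K x a t)) \<partial>M)
         + prob_space.variance M (\<lambda>x. surv_pol pe K x t)
     \<and> real n * prob_space.variance (data_law n M p0 K) (V_ips n pe p0 K t)
       - real n * prob_space.variance (data_law n M p0 K) (V_dr n pe p0 K t)
       = (\<integral>x. var_act p0 x (\<lambda>a. iw pe p0 x a * surv K x a t) \<partial>M)
     \<and> (\<integral>x. var_act p0 x (\<lambda>a. iw pe p0 x a * surv K x a t) \<partial>M) \<ge> 0
     \<and> prob_space.variance (data_law n M p0 K) (V_dr n pe p0 K t)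
       \<le> prob_space.variance (data_law n M p0 K) (V_ips n pe p0 K t)"
proof -
  interpret M: prob_space M by (rule P)
  let ?Q = "obs_law M p0 K"
  interpret Q: prob_space ?Q by (rule Q_prob)
  have pe_meas[measurable]: "(\<lambda>x. pe x a) \<in> borel_measurable M" for a
    using pole unfolding is_policy_def by auto
  have pe_nonneg: "x \<in> space M \<Longrightarrow> 0 \<le> pe x a" for x a
    using pole unfolding is_policy_def by auto
  have pe_sum: "x \<in> space M \<Longrightarrow> (\<Sum>a\<in>UNIV. pe x a) = 1" for x
    using pole unfolding is_policy_def by auto
  have iw_meas[measurable]: "(\<lambda>x. iw pe p0 x a) \<in> borel_measurable M" for a
    unfolding iw_def by measurable
  have iw_nonneg: "x \<in> space M \<Longrightarrow> 0 \<le> iw pe p0 x a" for x a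
    unfolding iw_def using pe_nonneg p0_nonneg by auto
  have k1: "x \<in> space M \<Longrightarrow> p0 x a * iw pe p0 x a = pe x a" for x a
    unfolding iw_def using support[of x a] pe_nonneg[of x a] p0_nonneg[of x a]
    by (cases "p0 x a = 0") (auto simp: less_eq_real_def)
  have Sp_meas[measurable]: "(\<lambda>x. surv_pol pe K x t) \<in> borel_measurable M"
    unfolding surv_pol_def by measurable
  have Sp_bounds: "0 \<le> surv_pol pe K x t \<and> surv_pol pe K x t \<le> 1" if x: "x \<in> space M" for x
  proof -
    have "surv_pol pe K x t \<le> (\<Sum>a\<in>UNIV. pe x a)" unfolding surv_pol_def
      using surv_bounds[OF x] pe_nonneg[OF x] by (intro sum_mono) (simp add: mult_left_le)
    moreover have "0 \<le> surv_pol pe K x t" unfolding surv_pol_def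
      using surv_bounds[OF x] pe_nonneg[OF x] by (intro sum_nonneg) simp
    ultimately show ?thesis using pe_sum[OF x] by simp
  qed
  have Sp_int: "integrable M (\<lambda>x. surv_pol pe K x t)"
    by (rule M.integrable_const_bound[where B=1]) (use Sp_bounds in auto)
  have Sp2_int: "integrable M (\<lambda>x. (surv_pol pe K x t)\<^sup>2)"
    by (rule M.integrable_const_bound[where B=1]) (use Sp_bounds in \<open>auto simp: abs_le_iff power_le_one\<close>)
  define F1 where "F1 x = (\<Sum>a\<in>UNIV. p0 x a * (iw pe p0 x a)\<^sup>2 * surv K x a t / cens K t x a)" for x
  define F2 where "F2 x = (\<Sum>a\<in>UNIV. p0 x a * (iw pe p0 x a * surv K x a t)\<^sup>2)" for x
  have F1_int: "integrable M F1" using finvar unfolding F1_def .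
  have F2_int: "integrable M F2"
  proof (rule Bochner_Integration.integrable_bound[OF F1_int])
    show "F2 \<in> borel_measurable M" unfolding F2_def by measurable
    show "AE x in M. norm (F2 x) \<le> norm (F1 x)"
    proof (rule AE_I2)
      fix x assume x: "x \<in> space M"
      have le: "p0 x a * (iw pe p0 x a * surv K x a t)\<^sup>2 \<le> p0 x a * (iw pe p0 x a)\<^sup>2 * surv K x a t / cens K t x a" for a
      proof -
        have S: "0 \<le> surv K x a t" "surv K x a t \<le> 1" using surv_bounds[OF x] by auto
        have G: "0 < cens K t x a" "cens K t x a \<le> 1" using Gpos[OF x] cens_bounds[OF x] by auto
        have "(surv K x a t)\<^sup>2 \<le> surv K x a t" using S by (simp add: power2_eq_square mult_left_le)
        also have "\<dots> \<le> surv K x a t / cens K t x a" using S G by (simp add: le_divide_eq mult_left_le)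
        finally have "(surv K x a t)\<^sup>2 \<le> surv K x a t / cens K t x a" .
        then have "p0 x a * (iw pe p0 x a)\<^sup>2 * (surv K x a t)\<^sup>2 \<le> p0 x a * (iw pe p0 x a)\<^sup>2 * (surv K x a t / cens K t x a)"
          using p0_nonneg[OF x] by (intro mult_left_mono) auto
        then show ?thesis by (simp add: power_mult_distrib mult.assoc)
      qed
      have nn1: "0 \<le> F2 x" unfolding F2_def using p0_nonneg[OF x] by (intro sum_nonneg) auto
      have "F2 x \<le> F1 x" unfolding F1_def F2_def by (intro sum_mono le)
      then show "norm (F2 x) \<le> norm (F1 x)" using nn1 by simp
    qed
  qed
  have k2: "(\<Sum>a\<in>UNIV. p0 x a * (iw pe p0 x a * surv K x a t)) = surv_pol pe K x t" if x: "x \<in> space M" for x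
    unfolding surv_pol_def using k1[OF x] by (simp add: mult.assoc[symmetric])
  have sig_eq: "(\<Sum>a\<in>UNIV. p0 x a * ((iw pe p0 x a)\<^sup>2 * sigma2 K x a t)) = F1 x - F2 x" for x
    unfolding F1_def F2_def sigma2_def sum_subtractf[symmetric]
    by (intro sum.cong refl) (simp add: algebra_simps power_mult_distrib)
  have va_eq: "var_act p0 x (\<lambda>a. iw pe p0 x a * surv K x a t) = F2 x - (surv_pol pe K x t)\<^sup>2" if x: "x \<in> space M" for x
    unfolding var_act_def F2_def k2[OF x] ..

  have Gne: "x \<in> space M \<Longrightarrow> cens K t x a \<noteq> 0" for x a using Gpos[of x a] by simp
  define \<phi>Y where "\<phi>Y x a b = iw pe p0 x a * (if b then 1 else 0) / cens K t x a" for x a b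
  define \<phi>Y2 where "\<phi>Y2 x a b = (\<phi>Y x a b)\<^sup>2" for x a b
  define \<phi>W where "\<phi>W x a (b::bool) = iw pe p0 x a * surv K x a t" for x a b
  define \<phi>P where "\<phi>P x (a::'a) (b::bool) = surv_pol pe K x t" for x a b
  define \<phi>Z2 where "\<phi>Z2 x a b = (iw pe p0 x a * ((if b then 1 else 0) / cens K t x a - surv K x a t) + surv_pol pe K x t)\<^sup>2" for x a b
  have mY[measurable]: "(\<lambda>x. \<phi>Y x a b) \<in> borel_measurable M" for a b unfolding \<phi>Y_def by measurable
  have mY2[measurable]: "(\<lambda>x. \<phi>Y2 x a b) \<in> borel_measurable M" for a b unfolding \<phi>Y2_def by measurable
  have mW[measurable]: "(\<lambda>x. \<phi>W x a b) \<in> borel_measurable M" for a b unfolding \<phi>W_def by measurable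
  have mP[measurable]: "(\<lambda>x. \<phi>P x a b) \<in> borel_measurable M" for a b unfolding \<phi>P_def by measurable
  have mZ2[measurable]: "(\<lambda>x. \<phi>Z2 x a b) \<in> borel_measurable M" for a b unfolding \<phi>Z2_def by measurable
  have nY: "x \<in> space M \<Longrightarrow> 0 \<le> \<phi>Y x a b" for x a b
    unfolding \<phi>Y_def using iw_nonneg[of x a] Gpos[of x a] by auto
  have nY2: "x \<in> space M \<Longrightarrow> 0 \<le> \<phi>Y2 x a b" for x a b unfolding \<phi>Y2_def by simp
  have nW: "x \<in> space M \<Longrightarrow> 0 \<le> \<phi>W x a b" for x a b
    unfolding \<phi>W_def using iw_nonneg[of x a] surv_bounds[of x a] by auto
  have nP: "x \<in> space M \<Longrightarrow> 0 \<le> \<phi>P x a b" for x a b unfolding \<phi>P_def using Sp_bounds by auto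
  have nZ2: "x \<in> space M \<Longrightarrow> 0 \<le> \<phi>Z2 x a b" for x a b unfolding \<phi>Z2_def by simp
  have GY: "GG t \<phi>Y x = surv_pol pe K x t" if x: "x \<in> space M" for x
  proof -
    have "GG t \<phi>Y x = (\<Sum>a\<in>UNIV. p0 x a * (iw pe p0 x a * surv K x a t))"
      unfolding GG_def qq_def \<phi>Y_def
      by (intro sum.cong refl) (simp add: field_simps Gne[OF x])
    then show ?thesis using k2[OF x] by simp
  qed
  have GY2: "GG t \<phi>Y2 x = F1 x" if x: "x \<in> space M" for x
    unfolding GG_def \<phi>Y2_def \<phi>Y_def F1_def
    by (intro sum.cong refl) (simp add: qq_def field_simps power2_eq_square Gne[OF x])
  have GW: "GG t \<phi>W x = surv_pol pe K x t" if x: "x \<in> space M" for x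
  proof -
    have "GG t \<phi>W x = (\<Sum>a\<in>UNIV. p0 x a * (iw pe p0 x a * surv K x a t))"
      unfolding GG_def \<phi>W_def by (intro sum.cong refl) (simp add: algebra_simps)
    then show ?thesis using k2[OF x] by simp
  qed
  have GP: "GG t \<phi>P x = surv_pol pe K x t" if x: "x \<in> space M" for x
  proof -
    have "GG t \<phi>P x = (\<Sum>a\<in>UNIV. p0 x a) * surv_pol pe K x t"
      unfolding GG_def \<phi>P_def sum_distrib_right by (intro sum.cong refl) (simp add: algebra_simps)
    then show ?thesis using p0_sum[OF x] by simp
  qed
  have GZ2: "GG t \<phi>Z2 x = (F1 x - F2 x) + (surv_pol pe K x t)\<^sup>2" if x: "x \<in> space M" for x
  proof -
    have "GG t \<phi>Z2 x = (\<Sum>a\<in>UNIV. p0 x a * ((iw pe p0 x a)\<^sup>2 * sigma2 K x a t) + p0 x a * (surv_pol pe K x t)\<^sup>2)"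
      unfolding GG_def sigma2_def
    proof (intro sum.cong refl)
      fix a
      have h1: "\<phi>Z2 x a True = (iw pe p0 x a * (1 / cens K t x a - surv K x a t) + surv_pol pe K x t)\<^sup>2"
        and h2: "\<phi>Z2 x a False = (iw pe p0 x a * (0 / cens K t x a - surv K x a t) + surv_pol pe K x t)\<^sup>2"
        by (simp_all add: \<phi>Z2_def)
      have e: "qq t x a * (iw pe p0 x a * (1 / cens K t x a - surv K x a t) + surv_pol pe K x t)\<^sup>2
          + (1 - qq t x a) * (iw pe p0 x a * (0 / cens K t x a - surv K x a t) + surv_pol pe K x t)\<^sup>2
          = (iw pe p0 x a)\<^sup>2 * (surv K x a t / cens K t x a - (surv K x a t)\<^sup>2) + (surv_pol pe K x t)\<^sup>2"
        by (rule alg_Z[OF Gpos[OF x]]) (simp add: qq_def)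
      show "p0 x a * (qq t x a * \<phi>Z2 x a True + (1 - qq t x a) * \<phi>Z2 x a False)
          = p0 x a * ((iw pe p0 x a)\<^sup>2 * (surv K x a t / cens K t x a - (surv K x a t)\<^sup>2)) + p0 x a * (surv_pol pe K x t)\<^sup>2"
        unfolding h1 h2 e by (simp add: distrib_left)
    qed
    also have "\<dots> = (F1 x - F2 x) + (\<Sum>a\<in>UNIV. p0 x a) * (surv_pol pe K x t)\<^sup>2"
      by (simp add: sum.distrib sig_eq sum_distrib_right)
    finally show ?thesis using p0_sum[OF x] by simp
  qed
  have Sp_eq_int: "integrable M (GG t \<phi>Y)" "integrable M (GG t \<phi>W)" "integrable M (GG t \<phi>P)"
    using Sp_int GY GW GP by (auto intro: Bochner_Integration.integrable_cong[THEN iffD2, OF refl])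
  have Y2_int: "integrable M (GG t \<phi>Y2)"
    using F1_int GY2 by (auto intro: Bochner_Integration.integrable_cong[THEN iffD2, OF refl])
  have Z2_int: "integrable M (GG t \<phi>Z2)"
  proof -
    have "integrable M (\<lambda>x. (F1 x - F2 x) + (surv_pol pe K x t)\<^sup>2)" using F1_int F2_int Sp2_int by auto
    then show ?thesis using GZ2 by (auto intro: Bochner_Integration.integrable_cong[THEN iffD2, OF refl])
  qed
  note QY = Q_phi_int[OF mY nY Sp_eq_int(1)]
  note QY2 = Q_phi_int[OF mY2 nY2 Y2_int]
  note QW = Q_phi_int[OF mW nW Sp_eq_int(2)]
  note QP = Q_phi_int[OF mP nP Sp_eq_int(3)]
  note QZ2 = Q_phi_int[OF mZ2 nZ2 Z2_int]

  define fY where "fY = (\<lambda>z::('x \<times> 'a \<times> real \<times> bool). case z of (x, a, T, r) \<Rightarrow> iw pe p0 x a * (if T > t then 1 else 0) / cens K t x a)"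
  define fZ where "fZ = (\<lambda>z::('x \<times> 'a \<times> real \<times> bool). case z of (x, a, T, r) \<Rightarrow>
      iw pe p0 x a * ((if T > t then 1 else 0) / cens K t x a - surv K x a t) + (\<Sum>b\<in>UNIV. pe x b * surv K x b t))"
  have fY_eq: "fY = (\<lambda>z. \<phi>Y (fst z) (fst (snd z)) (t < fst (snd (snd z))))"
    by (auto simp: fY_def \<phi>Y_def fun_eq_iff split: prod.split)
  have fY2_eq: "(\<lambda>z. (fY z)\<^sup>2) = (\<lambda>z. \<phi>Y2 (fst z) (fst (snd z)) (t < fst (snd (snd z))))"
    by (simp add: fY_eq \<phi>Y2_def)
  have fZ_eq: "fZ = (\<lambda>z. \<phi>Y (fst z) (fst (snd z)) (t < fst (snd (snd z))) - \<phi>W (fst z) (fst (snd z)) (t < fst (snd (snd z)))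
       + \<phi>P (fst z) (fst (snd z)) (t < fst (snd (snd z))))"
    by (auto simp: fZ_def \<phi>Y_def \<phi>W_def \<phi>P_def surv_pol_def fun_eq_iff right_diff_distrib split: prod.split)
  have fZ2_eq: "(\<lambda>z. (fZ z)\<^sup>2) = (\<lambda>z. \<phi>Z2 (fst z) (fst (snd z)) (t < fst (snd (snd z))))"
    by (auto simp: fZ_def \<phi>Z2_def surv_pol_def fun_eq_iff split: prod.split)
  have Vips: "V_ips n pe p0 K t = (\<lambda>D. (1/real n) * (\<Sum>i<n. fY (D i)))"
    by (intro ext) (simp only: V_ips_def fY_def)
  have Vdr: "V_dr n pe p0 K t = (\<lambda>D. (1/real n) * (\<Sum>i<n. fZ (D i)))"
    by (intro ext) (simp only: V_dr_def fZ_def)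
  have dl: "data_law n M p0 K = PiM {..<n} (\<lambda>_. ?Q)" unfolding data_law_def ..
  define IS where "IS = (\<integral>x. surv_pol pe K x t \<partial>M)"
  define IS2 where "IS2 = (\<integral>x. (surv_pol pe K x t)\<^sup>2 \<partial>M)"
  define I1 where "I1 = integral\<^sup>L M F1"
  define I2 where "I2 = integral\<^sup>L M F2"
  have GSp: "integral\<^sup>L M (GG t \<phi>) = IS" if "\<And>x. x \<in> space M \<Longrightarrow> GG t \<phi> x = surv_pol pe K x t" for \<phi>
    unfolding IS_def using that by (intro Bochner_Integration.integral_cong) auto
  have iY: "integrable ?Q fY" and EY: "Q.expectation fY = IS"
    using QY GSp[OF GY] by (simp_all add: fY_eq)
  have iY2: "integrable ?Q (\<lambda>z. (fY z)\<^sup>2)" and EY2: "Q.expectation (\<lambda>z. (fY z)\<^sup>2) = I1"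
  proof -
    show "integrable ?Q (\<lambda>z. (fY z)\<^sup>2)" using QY2(1) by (simp add: fY2_eq)
    have "integral\<^sup>L M (GG t \<phi>Y2) = I1" unfolding I1_def using GY2 by (intro Bochner_Integration.integral_cong) auto
    then show "Q.expectation (\<lambda>z. (fY z)\<^sup>2) = I1" using QY2(2) by (simp add: fY2_eq)
  qed
  have iZ: "integrable ?Q fZ" and EZ: "Q.expectation fZ = IS"
  proof -
    show "integrable ?Q fZ" unfolding fZ_eq using QY(1) QW(1) QP(1) by auto
    have "Q.expectation fZ = IS - IS + IS" unfolding fZ_eq
      using QY QW QP GSp[OF GY] GSp[OF GW] GSp[OF GP] by simp
    then show "Q.expectation fZ = IS" by simp
  qed
  have iZ2: "integrable ?Q (\<lambda>z. (fZ z)\<^sup>2)" and EZ2: "Q.expectation (\<lambda>z. (fZ z)\<^sup>2) = I1 - I2 + IS2"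
  proof -
    show "integrable ?Q (\<lambda>z. (fZ z)\<^sup>2)" using QZ2(1) by (simp add: fZ2_eq)
    have "integral\<^sup>L M (GG t \<phi>Z2) = (\<integral>x. (F1 x - F2 x) + (surv_pol pe K x t)\<^sup>2 \<partial>M)"
      using GZ2 by (intro Bochner_Integration.integral_cong) auto
    also have "\<dots> = I1 - I2 + IS2" unfolding I1_def I2_def IS2_def using F1_int F2_int Sp2_int by simp
    finally show "Q.expectation (\<lambda>z. (fZ z)\<^sup>2) = I1 - I2 + IS2" using QZ2(2) by (simp add: fZ2_eq)
  qed
  have VY: "real n * prob_space.variance (data_law n M p0 K) (V_ips n pe p0 K t) = I1 - IS\<^sup>2"
    unfolding Vips dl iid_var[OF Q_prob iY iY2 n] using Q.variance_eq[OF iY iY2] EY EY2 by simp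
  have VZ: "real n * prob_space.variance (data_law n M p0 K) (V_dr n pe p0 K t) = I1 - I2 + IS2 - IS\<^sup>2"
    unfolding Vdr dl iid_var[OF Q_prob iZ iZ2 n] using Q.variance_eq[OF iZ iZ2] EZ EZ2 by simp
  have Isig: "(\<integral>x. (\<Sum>a\<in>UNIV. p0 x a * ((iw pe p0 x a)\<^sup>2 * sigma2 K x a t)) \<partial>M) = I1 - I2"
    unfolding sig_eq I1_def I2_def using F1_int F2_int by simp
  have Iva: "(\<integral>x. var_act p0 x (\<lambda>a. iw pe p0 x a * surv K x a t) \<partial>M) = I2 - IS2"
  proof -
    have "(\<integral>x. var_act p0 x (\<lambda>a. iw pe p0 x a * surv K x a t) \<partial>M) = (\<integral>x. F2 x - (surv_pol pe K x t)\<^sup>2 \<partial>M)"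
      using va_eq by (intro Bochner_Integration.integral_cong) auto
    also have "\<dots> = I2 - IS2" unfolding I2_def IS2_def using F2_int Sp2_int by simp
    finally show ?thesis .
  qed
  have VM: "prob_space.variance M (\<lambda>x. surv_pol pe K x t) = IS2 - IS\<^sup>2"
    using M.variance_eq[OF Sp_int Sp2_int] unfolding IS_def IS2_def by simp
  have vnn: "(\<integral>x. var_act p0 x (\<lambda>a. iw pe p0 x a * surv K x a t) \<partial>M) \<ge> 0"
    by (intro Bochner_Integration.integral_nonneg var_act_nonneg p0_nonneg p0_sum)
  have np: "0 < real n" using n by simp
  have le: "real n * prob_space.variance (data_law n M p0 K) (V_dr n pe p0 K t)
      \<le> real n * prob_space.variance (data_law n M p0 K) (V_ips n pe p0 K t)"
    using VY VZ vnn Iva by simp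
  have le2: "prob_space.variance (data_law n M p0 K) (V_dr n pe p0 K t)
      \<le> prob_space.variance (data_law n M p0 K) (V_ips n pe p0 K t)"
    using le by (subst (asm) mult_le_cancel_left_pos[OF np])
  show ?thesis
  proof (intro conjI)
    show "real n * prob_space.variance (data_law n M p0 K) (V_ips n pe p0 K t)
       = (\<integral>x. (\<Sum>a\<in>UNIV. p0 x a * ((iw pe p0 x a)\<^sup>2 * sigma2 K x a t)) \<partial>M)
         + (\<integral>x. var_act p0 x (\<lambda>a. iw pe p0 x a * surv K x a t) \<partial>M)
         + prob_space.variance M (\<lambda>x. surv_pol pe K x t)"
      unfolding VY Isig Iva VM by simp
    show "real n * prob_space.variance (data_law n M p0 K) (V_dr n pe p0 K t)
       = (\<integral>x. (\<Sum>a\<in>UNIV. p0 x a * ((iw pe p0 x a)\<^sup>2 * sigma2 K x a t)) \<partial>M)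
         + prob_space.variance M (\<lambda>x. surv_pol pe K x t)"
      unfolding VZ Isig VM by simp
    show "real n * prob_space.variance (data_law n M p0 K) (V_ips n pe p0 K t)
       - real n * prob_space.variance (data_law n M p0 K) (V_dr n pe p0 K t)
       = (\<integral>x. var_act p0 x (\<lambda>a. iw pe p0 x a * surv K x a t) \<partial>M)"
      unfolding VY VZ Iva by simp
  qed (rule vnn, rule le2)
qed

end

theorem theorem2:
  fixes M :: "'x measure"
    and p0 pe :: "'x \<Rightarrow> 'a::finite \<Rightarrow> real"
    and K :: "'x \<Rightarrow> 'a \<Rightarrow> (real \<times> real) measure"
    and t :: real and n :: nat
  assumes P: "prob_space M"
    and pol0: "is_policy M p0" and pole: "is_policy M pe"
    and kern: "\<And>a. (\<lambda>x. K x a) \<in> measurable M (prob_algebra (borel \<Otimes>\<^sub>M borel))"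
    and nonneg: "\<And>x a. x \<in> space M \<Longrightarrow> AE z in K x a. 0 \<le> fst z \<and> 0 \<le> snd z"
    and t: "0 \<le> t" and n: "1 \<le> n"
    and support: "\<And>x a. x \<in> space M \<Longrightarrow> pe x a > 0 \<Longrightarrow> p0 x a > 0"
    and indep: "\<And>x a. x \<in> space M \<Longrightarrow>
                   K x a = distr (K x a) borel fst \<Otimes>\<^sub>M distr (K x a) borel snd"
    and Gpos: "\<And>x a. x \<in> space M \<Longrightarrow> cens K t x a > 0"
    and finvar: "integrable M (\<lambda>x. \<Sum>a\<in>UNIV. p0 x a * (iw pe p0 x a)\<^sup>2 * surv K x a t / cens K t x a)"
  shows
    "real n * prob_space.variance (data_law n M p0 K) (V_ips n pe p0 K t)
       = (\<integral>x. (\<Sum>a\<in>UNIV. p0 x a * ((iw pe p0 x a)\<^sup>2 * sigma2 K x a t)) \<partial>M)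
         + (\<integral>x. var_act p0 x (\<lambda>a. iw pe p0 x a * surv K x a t) \<partial>M)
         + prob_space.variance M (\<lambda>x. surv_pol pe K x t)
     \<and> real n * prob_space.variance (data_law n M p0 K) (V_dr n pe p0 K t)
       = (\<integral>x. (\<Sum>a\<in>UNIV. p0 x a * ((iw pe p0 x a)\<^sup>2 * sigma2 K x a t)) \<partial>M)
         + prob_space.variance M (\<lambda>x. surv_pol pe K x t)
     \<and> real n * prob_space.variance (data_law n M p0 K) (V_ips n pe p0 K t)
       - real n * prob_space.variance (data_law n M p0 K) (V_dr n pe p0 K t)
       = (\<integral>x. var_act p0 x (\<lambda>a. iw pe p0 x a * surv K x a t) \<partial>M)
     \<and> (\<integral>x. var_act p0 x (\<lambda>a. iw pe p0 x a * surv K x a t) \<partial>M) \<ge> 0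
     \<and> prob_space.variance (data_law n M p0 K) (V_dr n pe p0 K t)
       \<le> prob_space.variance (data_law n M p0 K) (V_ips n pe p0 K t)"
  using main[OF P pol0 kern indep pole n support Gpos finvar] by blast

end
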